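(* Let $G=(V,E,w)$ be an undirected graph with edge weights $w:E\to\mathbb{R}^+$, let $s,t\in V$, and let $h:V\to\mathbb{R}$ be a consistent heuristic, i.e. $h(u)\le w(u,v)+h(v)$ for every edge $\{u,v\}\in E$ taken in either orientation. Run the bidirectional stepping search described in the context, using the following pruning rule, where $\mu$ is the current value of the global variable at the time of the check: - a forward copy $v^{+}$ is pruned if and only if $\delta[v^{+}]+h(v)\ge\mu/2$; - a backward copy $v^{-}$ is pruned if and only if $\delta[v^{-}]-h(v)\ge\mu/2$. Then, for every choice of thresholds in the rounds and every interleaving of the parallel atomic operations, if the algorithm terminates (i.e. the frontier becomes empty), the returned value $\mu$ equals the shortest-path distance $d(s,t)$ in $G$.
   Context: Bidirectional stepping search with a pruning rule. For every vertex $v\in V$ there are two copies: $v^{+}$ (search from $s$) and $v^{-}$ (search from $t$). Each copy has a tentative distance $\delta[v^{\pm}]$, initialized to $+\infty$. A global variable $\mu$ is initialized to $+\infty$. Initialization sets $\delta[s^{+}]=0$ and $\delta[t^{-}]=0$, and inserts $s^{+}$ and $t^{-}$ into a set $F$, the frontier. While $F\neq\emptyset$, a round is executed. A real threshold $\theta$ is chosen, and it may depend arbitrarily on the current state; for example, it may be compared against $\delta$ plus the heuristic. An arbitrary nonempty-or-empty subset of $F$ selected by this threshold is removed from $F$. Each removed $u^{\oplus}$ is processed in parallel as follows: - If $u^{\oplus}$ satisfies the pruning rule, nothing is done. - Otherwise, for every neighbor $v$ of $u$, the algorithm performs an atomic write-min $\delta[v^{\oplus}]\leftarrow\min(\delta[v^{\oplus}],\,\delta[u^{\oplus}]+w(u,v))$.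 - If this write-min strictly decreased $\delta[v^{\oplus}]$, the algorithm then atomically sets $\mu\leftarrow\min(\mu,\,\delta[v^{+}]+\delta[v^{-}])$. After that, if $v^{\oplus}$ does not satisfy the pruning rule, $v^{\oplus}$ is inserted into $F$ (if not already present). At termination the algorithm returns $\mu$. Tentative distances only decrease over time. $d(u,v)$ denotes the true shortest-path distance in $G$. *)

theory Defs
  imports Main "HOL-Library.Multiset" "HOL-Library.Extended_Real"
begin

text \<open>Graph: vertex set V, symmetric edge relation E (ordered pairs, both orientations),
  weight function w (only its values on E matter), heuristic h.
  A copy of a vertex is a pair (v, b): b = True is the forward copy v+, b = False the backward copy v-.\<close>

type_synonym 'v copy = "'v \<times> bool"

definition walk :: "('v \<times> 'v) set \<Rightarrow> 'v list \<Rightarrow> bool" where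
  "walk E xs \<longleftrightarrow> xs \<noteq> [] \<and> (\<forall>i < length xs - 1. (xs ! i, xs ! Suc i) \<in> E)"

definition walk_len :: "('v \<Rightarrow> 'v \<Rightarrow> real) \<Rightarrow> 'v list \<Rightarrow> real" where
  "walk_len w xs = (\<Sum>i < length xs - 1. w (xs ! i) (xs ! Suc i))"

definition dist :: "('v \<times> 'v) set \<Rightarrow> ('v \<Rightarrow> 'v \<Rightarrow> real) \<Rightarrow> 'v \<Rightarrow> 'v \<Rightarrow> ereal" where
  "dist E w s t = (INF xs \<in> {xs. walk E xs \<and> hd xs = s \<and> last xs = t}. ereal (walk_len w xs))"

definition nbrs :: "('v \<times> 'v) set \<Rightarrow> 'v \<Rightarrow> 'v set" where
  "nbrs E u = {v. (u, v) \<in> E}"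

fun pruned :: "('v \<Rightarrow> real) \<Rightarrow> ereal \<Rightarrow> ('v copy \<Rightarrow> ereal) \<Rightarrow> 'v copy \<Rightarrow> bool" where
  "pruned h mu d (v, True) \<longleftrightarrow> d (v, True) + ereal (h v) \<ge> mu / 2"
| "pruned h mu d (v, False) \<longleftrightarrow> d (v, False) - ereal (h v) \<ge> mu / 2"

text \<open>Pending atomic operations of the parallel processing in the current round.
  Check c: pruning test of a removed copy c;
  Rd c v: read delta[c] to form delta[c] + w(u,v) for neighbour v of u = fst c;
  Wr c x: atomic write-min delta[c] <- min(delta[c], x);
  Mu c: atomic mu <- min(mu, delta[v+] + delta[v-]) with v = fst c (after a strict decrease of delta[c]);
  Ins c: pruning test of c and insertion of c into the frontier if not pruned.\<close>
datatype 'v task = Check "'v copy" | Rd "'v copy" 'v | Wr "'v copy" ereal | Mu "'v copy" | Ins "'v copy"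

record 'v state =
  dl :: "'v copy \<Rightarrow> ereal"
  mu :: ereal
  fr :: "'v copy set"
  pend :: "'v task multiset"

definition init_state :: "'v \<Rightarrow> 'v \<Rightarrow> 'v state" where
  "init_state s t = \<lparr> dl = (\<lambda>_. \<infinity>)((s, True) := 0, (t, False) := 0), mu = \<infinity>,
                       fr = {(s, True), (t, False)}, pend = {#} \<rparr>"

text \<open>A new round starts only when all operations of the
  previous round are finished and the frontier is nonempty; it removes an arbitrary subset S
  of the frontier (the threshold may depend arbitrarily on the state). The remaining steps may
  be interleaved arbitrarily.\<close>
inductive step :: "('v \<times> 'v) set \<Rightarrow> ('v \<Rightarrow> 'v \<Rightarrow> real) \<Rightarrow> ('v \<Rightarrow> real) \<Rightarrow> 'v state \<Rightarrow> 'v state \<Rightarrow> bool"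
  for E w h where
  round: "\<lbrakk> pend \<sigma> = {#}; fr \<sigma> \<noteq> {}; S \<subseteq> fr \<sigma> \<rbrakk> \<Longrightarrow>
    step E w h \<sigma> (\<sigma>\<lparr> fr := fr \<sigma> - S, pend := image_mset Check (mset_set S) \<rparr>)"
| check_pruned: "\<lbrakk> Check c \<in># pend \<sigma>; pruned h (mu \<sigma>) (dl \<sigma>) c \<rbrakk> \<Longrightarrow>
    step E w h \<sigma> (\<sigma>\<lparr> pend := pend \<sigma> - {#Check c#} \<rparr>)"
| check_expand: "\<lbrakk> Check c \<in># pend \<sigma>; \<not> pruned h (mu \<sigma>) (dl \<sigma>) c \<rbrakk> \<Longrightarrow>
    step E w h \<sigma> (\<sigma>\<lparr> pend := pend \<sigma> - {#Check c#} + image_mset (Rd c) (mset_set (nbrs E (fst c))) \<rparr>)"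
| read: "Rd c v \<in># pend \<sigma> \<Longrightarrow>
    step E w h \<sigma> (\<sigma>\<lparr> pend := add_mset (Wr (v, snd c) (dl \<sigma> c + ereal (w (fst c) v))) (pend \<sigma> - {#Rd c v#}) \<rparr>)"
| write_dec: "\<lbrakk> Wr c x \<in># pend \<sigma>; x < dl \<sigma> c \<rbrakk> \<Longrightarrow>
    step E w h \<sigma> (\<sigma>\<lparr> dl := (dl \<sigma>)(c := x), pend := add_mset (Mu c) (pend \<sigma> - {#Wr c x#}) \<rparr>)"
| write_nodec: "\<lbrakk> Wr c x \<in># pend \<sigma>; \<not> x < dl \<sigma> c \<rbrakk> \<Longrightarrow>
    step E w h \<sigma> (\<sigma>\<lparr> pend := pend \<sigma> - {#Wr c x#} \<rparr>)"
| mu_upd: "Mu c \<in># pend \<sigma> \<Longrightarrow>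
    step E w h \<sigma> (\<sigma>\<lparr> mu := min (mu \<sigma>) (dl \<sigma> (fst c, True) + dl \<sigma> (fst c, False)),
                      pend := add_mset (Ins c) (pend \<sigma> - {#Mu c#}) \<rparr>)"
| ins_pruned: "\<lbrakk> Ins c \<in># pend \<sigma>; pruned h (mu \<sigma>) (dl \<sigma>) c \<rbrakk> \<Longrightarrow>
    step E w h \<sigma> (\<sigma>\<lparr> pend := pend \<sigma> - {#Ins c#} \<rparr>)"
| ins_add: "\<lbrakk> Ins c \<in># pend \<sigma>; \<not> pruned h (mu \<sigma>) (dl \<sigma>) c \<rbrakk> \<Longrightarrow>
    step E w h \<sigma> (\<sigma>\<lparr> fr := insert c (fr \<sigma>), pend := pend \<sigma> - {#Ins c#} \<rparr>)"

end

theory Submission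
  imports Defs
begin


lemma walk_single: "walk E [x]"
  by (auto simp: walk_def)
lemma walk_len_single: "walk_len w [x] = 0"
  by (auto simp: walk_len_def)

lemma walk_Cons: "xs \<noteq> [] \<Longrightarrow> walk E (x#xs) \<longleftrightarrow> (x, hd xs) \<in> E \<and> walk E xs"
proof -
  assume "xs \<noteq> []"
  then obtain m where m: "length xs = Suc m" by (cases xs) auto
  have "walk E (x#xs) \<longleftrightarrow> (\<forall>i<Suc m. ((x#xs)!i, (x#xs)!Suc i) \<in> E)"
    unfolding walk_def using m by simp
  also have "\<dots> \<longleftrightarrow> (x, xs!0) \<in> E \<and> (\<forall>i<m. (xs!i, xs!Suc i) \<in> E)"
    by (subst All_less_Suc2) simp
  also have "\<dots> \<longleftrightarrow> (x, hd xs) \<in> E \<and> walk E xs"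
    unfolding walk_def using m \<open>xs \<noteq> []\<close> by (simp add: hd_conv_nth)
  finally show ?thesis .
qed

lemma walk_len_Cons: "xs \<noteq> [] \<Longrightarrow> walk_len w (x#xs) = w x (hd xs) + walk_len w xs"
proof -
  assume "xs \<noteq> []"
  then obtain m where m: "length xs = Suc m" by (cases xs) auto
  have "walk_len w (x#xs) = (\<Sum>i<Suc m. w ((x#xs)!i) ((x#xs)!Suc i))"
    unfolding walk_len_def using m by simp
  also have "\<dots> = w x (xs!0) + (\<Sum>i<m. w (xs!i) (xs!Suc i))"
    by (subst sum.lessThan_Suc_shift) simp
  also have "\<dots> = w x (hd xs) + walk_len w xs"
    unfolding walk_len_def using m \<open>xs \<noteq> []\<close> by (simp add: hd_conv_nth)
  finally show ?thesis .
qed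

lemma walk_append:
  "walk E xs \<Longrightarrow> walk E ys \<Longrightarrow> last xs = hd ys \<Longrightarrow>
   walk E (xs @ tl ys) \<and> walk_len w (xs @ tl ys) = walk_len w xs + walk_len w ys
   \<and> hd (xs @ tl ys) = hd xs \<and> last (xs @ tl ys) = last ys"
proof (induction xs)
  case Nil then show ?case by (simp add: walk_def)
next
  case (Cons x xs)
  show ?case
  proof (cases "xs = []")
    case True
    with Cons.prems have "ys \<noteq> []" "x = hd ys" by (auto simp: walk_def)
    then have ys: "ys = x # tl ys" by simp
    have "(x # xs) @ tl ys = ys" using True ys by simp
    then show ?thesis using True Cons.prems walk_len_single[of w x] ys
      by (metis add_0 last_ConsL list.sel(1))
  next
    case False
    with Cons.prems have w1: "walk E xs" "(x, hd xs) \<in> E" and l: "last xs = hd ys"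
      by (auto simp: walk_Cons)
    from Cons.IH[OF w1(1) Cons.prems(2) l]
    have IH: "walk E (xs @ tl ys)" "walk_len w (xs @ tl ys) = walk_len w xs + walk_len w ys"
       "hd (xs @ tl ys) = hd xs" "last (xs @ tl ys) = last ys" by auto
    have ne: "xs @ tl ys \<noteq> []" using False by simp
    have "walk E (x # (xs @ tl ys))" using IH w1 ne walk_Cons[OF ne, of E x] False by simp
    moreover have "walk_len w (x # (xs @ tl ys)) = w x (hd xs) + walk_len w (xs @ tl ys)"
      using walk_len_Cons[OF ne, of w x] IH False by simp
    moreover have "walk_len w (x # xs) = w x (hd xs) + walk_len w xs"
      using walk_len_Cons[OF False] .
    ultimately show ?thesis using IH False by simp
  qed
qed

definition okT :: "('v \<times> 'v) set \<Rightarrow> ('v \<Rightarrow> 'v \<Rightarrow> real) \<Rightarrow> 'v \<Rightarrow> 'v \<Rightarrow> ereal \<Rightarrow> bool" where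
  "okT E w a b x \<longleftrightarrow> x = \<infinity> \<or> (\<exists>xs. walk E xs \<and> hd xs = a \<and> last xs = b \<and> ereal (walk_len w xs) \<le> x)"

lemma okT_refl: "okT E w a a 0"
  unfolding okT_def using walk_single[of E a] walk_len_single[of w a] by (intro disjI2 exI[of _ "[a]"]) auto

lemma okT_inf: "okT E w a b \<infinity>" by (simp add: okT_def)

lemma okT_min: "okT E w a b x \<Longrightarrow> okT E w a b y \<Longrightarrow> okT E w a b (min x y)"
  by (simp add: min_def)

lemma okT_ninf: "okT E w a b x \<Longrightarrow> x \<noteq> -\<infinity>"
  unfolding okT_def by auto

lemma okT_concat: "okT E w a b x \<Longrightarrow> okT E w b c y \<Longrightarrow> okT E w a c (x + y)"
proof -
  assume A: "okT E w a b x" "okT E w b c y"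
  show ?thesis
  proof (cases "x = \<infinity> \<or> y = \<infinity>")
    case True
    then have "x + y = \<infinity>" using okT_ninf[OF A(1)] okT_ninf[OF A(2)]
      by (cases x; cases y; simp_all)
    then show ?thesis by (metis okT_inf)
  next
    case False
    then obtain xs ys where X: "walk E xs" "hd xs = a" "last xs = b" "ereal (walk_len w xs) \<le> x"
      and Y: "walk E ys" "hd ys = b" "last ys = c" "ereal (walk_len w ys) \<le> y"
      using A unfolding okT_def by blast
    from walk_append[OF X(1) Y(1), of w] X Y
    have "walk E (xs @ tl ys)" "walk_len w (xs @ tl ys) = walk_len w xs + walk_len w ys"
      "hd (xs @ tl ys) = a" "last (xs @ tl ys) = c" by auto
    moreover have "ereal (walk_len w xs + walk_len w ys) \<le> x + y"
      using add_mono[OF X(4) Y(4)] by simp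
    ultimately show ?thesis unfolding okT_def by metis
  qed
qed

lemma okT_edge: "(u, v) \<in> E \<Longrightarrow> okT E w u v (ereal (w u v))"
proof -
  assume e: "(u, v) \<in> E"
  have "walk E [u, v]" using e walk_single[of E v] by (simp add: walk_Cons)
  moreover have "walk_len w [u, v] = w u v" using walk_len_single[of w v] by (simp add: walk_len_Cons)
  ultimately show ?thesis unfolding okT_def by (intro disjI2 exI[of _ "[u,v]"]) auto
qed

lemma okT_mono: "okT E w a b x \<Longrightarrow> x \<le> y \<Longrightarrow> okT E w a b y"
proof -
  assume A: "okT E w a b x" "x \<le> y"
  show ?thesis
  proof (cases "x = \<infinity>")
    case True then have "y = \<infinity>" using A(2) by simp
    then show ?thesis by (simp add: okT_inf)
  next
    case False then obtain xs where "walk E xs \<and> hd xs = a \<and> last xs = b \<and> ereal (walk_len w xs) \<le> x"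
      using A unfolding okT_def by blast
    then have "walk E xs \<and> hd xs = a \<and> last xs = b \<and> ereal (walk_len w xs) \<le> y"
      using A(2) by auto
    then show ?thesis unfolding okT_def by blast
  qed
qed


definition sinv :: "('v \<times> 'v) set \<Rightarrow> ('v \<Rightarrow> 'v \<Rightarrow> real) \<Rightarrow> 'v \<Rightarrow> 'v \<Rightarrow> 'v state \<Rightarrow> bool" where
  "sinv E w s t \<sigma> \<longleftrightarrow> finite (fr \<sigma>) \<and> (\<forall>v. okT E w s v (dl \<sigma> (v,True)))
     \<and> (\<forall>v. okT E w v t (dl \<sigma> (v,False))) \<and> okT E w s t (mu \<sigma>)
     \<and> (\<forall>c v. Rd c v \<in># pend \<sigma> \<longrightarrow> (fst c, v) \<in> E)
     \<and> (\<forall>v x. Wr (v,True) x \<in># pend \<sigma> \<longrightarrow> okT E w s v x)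
     \<and> (\<forall>v x. Wr (v,False) x \<in># pend \<sigma> \<longrightarrow> okT E w v t x)"

lemma sinv_init: "sinv E w s t (init_state s t)"
proof -
  have T: "okT E w s v (dl (init_state s t) (v,True))" for v
    by (cases "v = s") (auto simp: init_state_def okT_refl okT_inf)
  have F: "okT E w v t (dl (init_state s t) (v,False))" for v
    by (cases "v = t") (auto simp: init_state_def okT_refl okT_inf)
  show ?thesis unfolding sinv_def using T F by (auto simp: init_state_def okT_inf)
qed

lemma okT_readT: "okT E w s u a \<Longrightarrow> (u, v) \<in> E \<Longrightarrow> okT E w s v (a + ereal (w u v))"
  using okT_concat okT_edge by metis

lemma okT_readF: "okT E w u t a \<Longrightarrow> (v, u) \<in> E \<Longrightarrow> w v u = w u v \<Longrightarrow> okT E w v t (a + ereal (w u v))"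
  using okT_concat[OF okT_edge[of v u E w]] by (metis add.commute)

lemma sinv_step:
  assumes sym: "\<And>u v. (u, v) \<in> E \<Longrightarrow> (v, u) \<in> E"
    and wsym: "\<And>u v. (u, v) \<in> E \<Longrightarrow> w u v = w v u"
    and st: "step E w h \<sigma> \<sigma>'" and I: "sinv E w s t \<sigma>"
  shows "sinv E w s t \<sigma>'"
  using st
proof (cases rule: step.cases)
  case (round S)
  then show ?thesis using I unfolding sinv_def by auto
next
  case (check_pruned c)
  then show ?thesis using I unfolding sinv_def by (auto dest: in_diffD)
next
  case (check_expand c)
  have fin: "finite (nbrs E (fst c)) \<or> mset_set (nbrs E (fst c)) = {#}" by (cases "finite (nbrs E (fst c))") auto
  have mem: "X \<in># pend \<sigma>' \<Longrightarrow> X \<in># pend \<sigma> \<or> (\<exists>v \<in> nbrs E (fst c). X = Rd c v)" for X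
  proof -
    assume "X \<in># pend \<sigma>'"
    moreover have "pend \<sigma>' = pend \<sigma> - {#Check c#} + image_mset (Rd c) (mset_set (nbrs E (fst c)))"
      using check_expand by simp
    ultimately have "X \<in># pend \<sigma> - {#Check c#} \<or> X \<in># image_mset (Rd c) (mset_set (nbrs E (fst c)))"
      by (metis union_iff)
    then show ?thesis using fin by (auto dest: in_diffD)
  qed
  have "sinv E w s t \<sigma>'" unfolding sinv_def
  proof (intro conjI allI impI)
    fix c' v assume "Rd c' v \<in># pend \<sigma>'"
    then show "(fst c', v) \<in> E" using mem[of "Rd c' v"] I unfolding sinv_def by (cases c') (auto simp: nbrs_def)
  next
    fix v x assume "Wr (v, True) x \<in># pend \<sigma>'"
    then show "okT E w s v x" using mem[of "Wr (v, True) x"] I unfolding sinv_def by auto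
  next
    fix v x assume "Wr (v, False) x \<in># pend \<sigma>'"
    then show "okT E w v t x" using mem[of "Wr (v, False) x"] I unfolding sinv_def by auto
  qed (use I check_expand in \<open>auto simp: sinv_def\<close>)
  then show ?thesis .
next
  case (read c v)
  have e: "(fst c, v) \<in> E" using I read unfolding sinv_def by blast
  obtain u b where c: "c = (u, b)" by (cases c)
  have new: "okT E w s v (dl \<sigma> c + ereal (w (fst c) v))" if "b = True"
    using I e c that okT_readT unfolding sinv_def by fastforce
  have new2: "okT E w v t (dl \<sigma> c + ereal (w (fst c) v))" if "b = False"
    using I e c that okT_readF[of E w u t _ v] sym wsym unfolding sinv_def by fastforce
  show ?thesis using I read new new2 c unfolding sinv_def
    by (cases b) (auto dest: in_diffD)
next
  case (write_dec c x)
  obtain u b where c: "c = (u, b)" by (cases c)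
  show ?thesis using I write_dec c unfolding sinv_def
    by (cases b) (auto dest: in_diffD)
next
  case (write_nodec c x)
  then show ?thesis using I unfolding sinv_def by (auto dest: in_diffD)
next
  case (mu_upd c)
  have "okT E w s t (dl \<sigma> (fst c, True) + dl \<sigma> (fst c, False))"
    using I okT_concat unfolding sinv_def by metis
  then have "okT E w s t (mu \<sigma>')" using I mu_upd okT_min unfolding sinv_def by auto
  then show ?thesis using I mu_upd unfolding sinv_def by (auto dest: in_diffD)
next
  case (ins_pruned c)
  then show ?thesis using I unfolding sinv_def by (auto dest: in_diffD)
next
  case (ins_add c)
  then show ?thesis using I unfolding sinv_def by (auto dest: in_diffD)
qed


lemma in_rm_neq: "x \<noteq> y \<Longrightarrow> x \<in># M - {#y#} \<longleftrightarrow> x \<in># M"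
  by (simp add: in_diff_count)

lemma rm_eq: "X \<in># M \<Longrightarrow> X \<notin># M - {#Y#} \<Longrightarrow> X = Y"
  by (metis in_rm_neq)

lemma step_dl_mono: "step E w h \<sigma> \<sigma>' \<Longrightarrow> dl \<sigma>' c \<le> dl \<sigma> c"
  by (induction rule: step.induct) auto

lemma step_mu_mono: "step E w h \<sigma> \<sigma>' \<Longrightarrow> mu \<sigma>' \<le> mu \<sigma>"
  by (induction rule: step.induct) auto

lemma step_dl_change: "step E w h \<sigma> \<sigma>' \<Longrightarrow> dl \<sigma>' c \<noteq> dl \<sigma> c \<Longrightarrow> Mu c \<in># pend \<sigma>'"
  by (induction rule: step.induct) (auto split: if_splits)

lemma step_fr_remove: "step E w h \<sigma> \<sigma>' \<Longrightarrow> finite (fr \<sigma>) \<Longrightarrow> c \<in> fr \<sigma> \<Longrightarrow> c \<notin> fr \<sigma>' \<Longrightarrow> Check c \<in># pend \<sigma>'"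
  by (induction rule: step.induct) (auto dest: finite_subset)

lemma step_Ins:
  "step E w h \<sigma> \<sigma>' \<Longrightarrow> Ins c \<in># pend \<sigma> \<Longrightarrow> Ins c \<notin># pend \<sigma>' \<Longrightarrow>
   \<not> pruned h (mu \<sigma>) (dl \<sigma>) c \<Longrightarrow> c \<in> fr \<sigma>'"
proof -
  assume s: "step E w h \<sigma> \<sigma>'" and a: "Ins c \<in># pend \<sigma>" and b: "Ins c \<notin># pend \<sigma>'"
    and np: "\<not> pruned h (mu \<sigma>) (dl \<sigma>) c"
  from s show ?thesis
  proof cases
    case round then show ?thesis using a by simp
  next
    case (check_pruned c')
    have "Ins c \<notin># pend \<sigma> - {#Check c'#}" using b check_pruned(1) by simp
    then have "Ins c = Check c'" by (rule rm_eq[OF a])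
    then show ?thesis by simp
  next
    case (check_expand c')
    have "Ins c \<notin># pend \<sigma> - {#Check c'#}" using b check_expand(1) by simp
    then have "Ins c = Check c'" by (rule rm_eq[OF a])
    then show ?thesis by simp
  next
    case (read c' v')
    have "Ins c \<notin># pend \<sigma> - {#Rd c' v'#}" using b read(1) by simp
    then have "Ins c = Rd c' v'" by (rule rm_eq[OF a])
    then show ?thesis by simp
  next
    case (write_dec c' x')
    have "Ins c \<notin># pend \<sigma> - {#Wr c' x'#}" using b write_dec(1) by simp
    then have "Ins c = Wr c' x'" by (rule rm_eq[OF a])
    then show ?thesis by simp
  next
    case (write_nodec c' x')
    have "Ins c \<notin># pend \<sigma> - {#Wr c' x'#}" using b write_nodec(1) by simp
    then have "Ins c = Wr c' x'" by (rule rm_eq[OF a])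
    then show ?thesis by simp
  next
    case (mu_upd c')
    have "Ins c \<notin># pend \<sigma> - {#Mu c'#}" using b mu_upd(1) by simp
    then have "Ins c = Mu c'" by (rule rm_eq[OF a])
    then show ?thesis by simp
  next
    case (ins_pruned c')
    have "Ins c \<notin># pend \<sigma> - {#Ins c'#}" using b ins_pruned(1) by simp
    then have "Ins c = Ins c'" by (rule rm_eq[OF a])
    then show ?thesis using ins_pruned np by simp
  next
    case (ins_add c')
    have "Ins c \<notin># pend \<sigma> - {#Ins c'#}" using b ins_add(1) by simp
    then have "Ins c = Ins c'" by (rule rm_eq[OF a])
    then show ?thesis using ins_add by simp
  qed
qed

lemma step_Check:
  "step E w h \<sigma> \<sigma>' \<Longrightarrow> Check c \<in># pend \<sigma> \<Longrightarrow> Check c \<notin># pend \<sigma>' \<Longrightarrow>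
   \<not> pruned h (mu \<sigma>) (dl \<sigma>) c \<Longrightarrow> finite (nbrs E (fst c)) \<Longrightarrow> v \<in> nbrs E (fst c) \<Longrightarrow> Rd c v \<in># pend \<sigma>'"
proof -
  assume s: "step E w h \<sigma> \<sigma>'" and a: "Check c \<in># pend \<sigma>" and b: "Check c \<notin># pend \<sigma>'"
    and np: "\<not> pruned h (mu \<sigma>) (dl \<sigma>) c"
    and fin: "finite (nbrs E (fst c))"
    and v: "v \<in> nbrs E (fst c)"
  from s show ?thesis
  proof cases
    case round then show ?thesis using a by simp
  next
    case (check_pruned c')
    have "Check c \<notin># pend \<sigma> - {#Check c'#}" using b check_pruned(1) by simp
    then have "Check c = Check c'" by (rule rm_eq[OF a])
    then show ?thesis using check_pruned np by simp
  next
    case (check_expand c')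
    have "Check c \<notin># pend \<sigma> - {#Check c'#}" using b check_expand(1) by simp
    then have "Check c = Check c'" by (rule rm_eq[OF a])
    then have "c = c'" by simp
    have m: "Rd c v \<in># image_mset (Rd c) (mset_set (nbrs E (fst c)))" using fin v by simp
    have "pend \<sigma>' = pend \<sigma> - {#Check c#} + image_mset (Rd c) (mset_set (nbrs E (fst c)))"
      using check_expand \<open>c = c'\<close> by simp
    then show ?thesis using m by (metis union_iff)
  next
    case (read c' v')
    have "Check c \<notin># pend \<sigma> - {#Rd c' v'#}" using b read(1) by simp
    then have "Check c = Rd c' v'" by (rule rm_eq[OF a])
    then show ?thesis by simp
  next
    case (write_dec c' x')
    have "Check c \<notin># pend \<sigma> - {#Wr c' x'#}" using b write_dec(1) by simp
    then have "Check c = Wr c' x'" by (rule rm_eq[OF a])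
    then show ?thesis by simp
  next
    case (write_nodec c' x')
    have "Check c \<notin># pend \<sigma> - {#Wr c' x'#}" using b write_nodec(1) by simp
    then have "Check c = Wr c' x'" by (rule rm_eq[OF a])
    then show ?thesis by simp
  next
    case (mu_upd c')
    have "Check c \<notin># pend \<sigma> - {#Mu c'#}" using b mu_upd(1) by simp
    then have "Check c = Mu c'" by (rule rm_eq[OF a])
    then show ?thesis by simp
  next
    case (ins_pruned c')
    have "Check c \<notin># pend \<sigma> - {#Ins c'#}" using b ins_pruned(1) by simp
    then have "Check c = Ins c'" by (rule rm_eq[OF a])
    then show ?thesis by simp
  next
    case (ins_add c')
    have "Check c \<notin># pend \<sigma> - {#Ins c'#}" using b ins_add(1) by simp
    then have "Check c = Ins c'" by (rule rm_eq[OF a])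
    then show ?thesis by simp
  qed
qed

lemma step_Rd:
  "step E w h \<sigma> \<sigma>' \<Longrightarrow> Rd c v \<in># pend \<sigma> \<Longrightarrow> Rd c v \<notin># pend \<sigma>' \<Longrightarrow>
   Wr (v, snd c) (dl \<sigma> c + ereal (w (fst c) v)) \<in># pend \<sigma>'"
proof -
  assume s: "step E w h \<sigma> \<sigma>'" and a: "Rd c v \<in># pend \<sigma>" and b: "Rd c v \<notin># pend \<sigma>'"
  from s show ?thesis
  proof cases
    case round then show ?thesis using a by simp
  next
    case (check_pruned c')
    have "Rd c v \<notin># pend \<sigma> - {#Check c'#}" using b check_pruned(1) by simp
    then have "Rd c v = Check c'" by (rule rm_eq[OF a])
    then show ?thesis by simp
  next
    case (check_expand c')
    have "Rd c v \<notin># pend \<sigma> - {#Check c'#}" using b check_expand(1) by simp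
    then have "Rd c v = Check c'" by (rule rm_eq[OF a])
    then show ?thesis by simp
  next
    case (read c' v')
    have "Rd c v \<notin># pend \<sigma> - {#Rd c' v'#}" using b read(1) by simp
    then have "Rd c v = Rd c' v'" by (rule rm_eq[OF a])
    then show ?thesis using read by simp
  next
    case (write_dec c' x')
    have "Rd c v \<notin># pend \<sigma> - {#Wr c' x'#}" using b write_dec(1) by simp
    then have "Rd c v = Wr c' x'" by (rule rm_eq[OF a])
    then show ?thesis by simp
  next
    case (write_nodec c' x')
    have "Rd c v \<notin># pend \<sigma> - {#Wr c' x'#}" using b write_nodec(1) by simp
    then have "Rd c v = Wr c' x'" by (rule rm_eq[OF a])
    then show ?thesis by simp
  next
    case (mu_upd c')
    have "Rd c v \<notin># pend \<sigma> - {#Mu c'#}" using b mu_upd(1) by simp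
    then have "Rd c v = Mu c'" by (rule rm_eq[OF a])
    then show ?thesis by simp
  next
    case (ins_pruned c')
    have "Rd c v \<notin># pend \<sigma> - {#Ins c'#}" using b ins_pruned(1) by simp
    then have "Rd c v = Ins c'" by (rule rm_eq[OF a])
    then show ?thesis by simp
  next
    case (ins_add c')
    have "Rd c v \<notin># pend \<sigma> - {#Ins c'#}" using b ins_add(1) by simp
    then have "Rd c v = Ins c'" by (rule rm_eq[OF a])
    then show ?thesis by simp
  qed
qed

lemma step_Wr:
  "step E w h \<sigma> \<sigma>' \<Longrightarrow> Wr c x \<in># pend \<sigma> \<Longrightarrow> Wr c x \<notin># pend \<sigma>' \<Longrightarrow> dl \<sigma>' c \<le> x"
proof -
  assume s: "step E w h \<sigma> \<sigma>'" and a: "Wr c x \<in># pend \<sigma>" and b: "Wr c x \<notin># pend \<sigma>'"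
  from s show ?thesis
  proof cases
    case round then show ?thesis using a by simp
  next
    case (check_pruned c')
    have "Wr c x \<notin># pend \<sigma> - {#Check c'#}" using b check_pruned(1) by simp
    then have "Wr c x = Check c'" by (rule rm_eq[OF a])
    then show ?thesis by simp
  next
    case (check_expand c')
    have "Wr c x \<notin># pend \<sigma> - {#Check c'#}" using b check_expand(1) by simp
    then have "Wr c x = Check c'" by (rule rm_eq[OF a])
    then show ?thesis by simp
  next
    case (read c' v')
    have "Wr c x \<notin># pend \<sigma> - {#Rd c' v'#}" using b read(1) by simp
    then have "Wr c x = Rd c' v'" by (rule rm_eq[OF a])
    then show ?thesis by simp
  next
    case (write_dec c' x')
    have "Wr c x \<notin># pend \<sigma> - {#Wr c' x'#}" using b write_dec(1) by simp
    then have "Wr c x = Wr c' x'" by (rule rm_eq[OF a])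
    then show ?thesis using write_dec by simp
  next
    case (write_nodec c' x')
    have "Wr c x \<notin># pend \<sigma> - {#Wr c' x'#}" using b write_nodec(1) by simp
    then have "Wr c x = Wr c' x'" by (rule rm_eq[OF a])
    then show ?thesis using write_nodec by (simp add: not_less)
  next
    case (mu_upd c')
    have "Wr c x \<notin># pend \<sigma> - {#Mu c'#}" using b mu_upd(1) by simp
    then have "Wr c x = Mu c'" by (rule rm_eq[OF a])
    then show ?thesis by simp
  next
    case (ins_pruned c')
    have "Wr c x \<notin># pend \<sigma> - {#Ins c'#}" using b ins_pruned(1) by simp
    then have "Wr c x = Ins c'" by (rule rm_eq[OF a])
    then show ?thesis by simp
  next
    case (ins_add c')
    have "Wr c x \<notin># pend \<sigma> - {#Ins c'#}" using b ins_add(1) by simp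
    then have "Wr c x = Ins c'" by (rule rm_eq[OF a])
    then show ?thesis by simp
  qed
qed

lemma step_Mu:
  "step E w h \<sigma> \<sigma>' \<Longrightarrow> Mu c \<in># pend \<sigma> \<Longrightarrow> Mu c \<notin># pend \<sigma>' \<Longrightarrow>
   mu \<sigma>' \<le> dl \<sigma> (fst c, True) + dl \<sigma> (fst c, False) \<and> Ins c \<in># pend \<sigma>'"
proof -
  assume s: "step E w h \<sigma> \<sigma>'" and a: "Mu c \<in># pend \<sigma>" and b: "Mu c \<notin># pend \<sigma>'"
  from s show ?thesis
  proof cases
    case round then show ?thesis using a by simp
  next
    case (check_pruned c')
    have "Mu c \<notin># pend \<sigma> - {#Check c'#}" using b check_pruned(1) by simp
    then have "Mu c = Check c'" by (rule rm_eq[OF a])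
    then show ?thesis by simp
  next
    case (check_expand c')
    have "Mu c \<notin># pend \<sigma> - {#Check c'#}" using b check_expand(1) by simp
    then have "Mu c = Check c'" by (rule rm_eq[OF a])
    then show ?thesis by simp
  next
    case (read c' v')
    have "Mu c \<notin># pend \<sigma> - {#Rd c' v'#}" using b read(1) by simp
    then have "Mu c = Rd c' v'" by (rule rm_eq[OF a])
    then show ?thesis by simp
  next
    case (write_dec c' x')
    have "Mu c \<notin># pend \<sigma> - {#Wr c' x'#}" using b write_dec(1) by simp
    then have "Mu c = Wr c' x'" by (rule rm_eq[OF a])
    then show ?thesis by simp
  next
    case (write_nodec c' x')
    have "Mu c \<notin># pend \<sigma> - {#Wr c' x'#}" using b write_nodec(1) by simp
    then have "Mu c = Wr c' x'" by (rule rm_eq[OF a])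
    then show ?thesis by simp
  next
    case (mu_upd c')
    have "Mu c \<notin># pend \<sigma> - {#Mu c'#}" using b mu_upd(1) by simp
    then have "Mu c = Mu c'" by (rule rm_eq[OF a])
    then show ?thesis using mu_upd by simp
  next
    case (ins_pruned c')
    have "Mu c \<notin># pend \<sigma> - {#Ins c'#}" using b ins_pruned(1) by simp
    then have "Mu c = Ins c'" by (rule rm_eq[OF a])
    then show ?thesis by simp
  next
    case (ins_add c')
    have "Mu c \<notin># pend \<sigma> - {#Ins c'#}" using b ins_add(1) by simp
    then have "Mu c = Ins c'" by (rule rm_eq[OF a])
    then show ?thesis by simp
  qed
qed

lemma ex_drop: "P i \<Longrightarrow> \<not> P n \<Longrightarrow> i \<le> n \<Longrightarrow> \<exists>j. i \<le> j \<and> j < n \<and> P j \<and> \<not> P (Suc j)"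
proof (induction n)
  case 0 then show ?case by auto
next
  case (Suc n)
  show ?case
  proof (cases "i = Suc n")
    case True then show ?thesis using Suc.prems by auto
  next
    case False
    then have "i \<le> n" using Suc.prems by auto
    show ?thesis
    proof (cases "P n")
      case True then show ?thesis using \<open>i \<le> n\<close> Suc.prems by auto
    next
      case False
      then obtain j where "i \<le> j \<and> j < n \<and> P j \<and> \<not> P (Suc j)" using Suc.IH Suc.prems \<open>i \<le> n\<close> by blast
      then show ?thesis by (intro exI[of _ j]) auto
    qed
  qed
qed

lemma last_change: "g k \<noteq> g n \<Longrightarrow> k \<le> n \<Longrightarrow>
  \<exists>i. k \<le> i \<and> i < n \<and> g i \<noteq> g (Suc i) \<and> (\<forall>j. Suc i \<le> j \<and> j \<le> n \<longrightarrow> g j = g n)"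
proof (induction n)
  case 0 then show ?case by auto
next
  case (Suc n)
  show ?case
  proof (cases "g n = g (Suc n)")
    case True
    then have "k \<noteq> Suc n" using Suc.prems by auto
    then have "k \<le> n" using Suc.prems by auto
    have "g k \<noteq> g n" using Suc.prems True by simp
    then obtain i where i1: "k \<le> i" and i2: "i < n" and i3: "g i \<noteq> g (Suc i)"
      and i4: "\<forall>j. Suc i \<le> j \<and> j \<le> n \<longrightarrow> g j = g n"
      using Suc.IH \<open>k \<le> n\<close> by blast
    have i5: "\<forall>j. Suc i \<le> j \<and> j \<le> Suc n \<longrightarrow> g j = g (Suc n)"
    proof (intro allI impI)
      fix j assume j: "Suc i \<le> j \<and> j \<le> Suc n"
      show "g j = g (Suc n)"
      proof (cases "j = Suc n")
        case True then show ?thesis by simp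
      next
        case False
        then have "Suc i \<le> j \<and> j \<le> n" using j by simp
        then have "g j = g n" using i4 by blast
        then show ?thesis using \<open>g n = g (Suc n)\<close> by simp
      qed
    qed
    have "i < Suc n" using i2 by simp
    then show ?thesis using i1 i3 i5 by blast
  next
    case False
    then show ?thesis using Suc.prems by (intro exI[of _ n]) (auto simp: le_Suc_eq)
  qed
qed

lemma notpruned_mono:
  assumes "\<not> pruned h m d c" "m \<le> m'" "d' c = d c"
  shows "\<not> pruned h m' d' c"
proof -
  obtain v b where c: "c = (v, b)" by (cases c)
  have mono: "m / 2 \<le> m' / 2" using assms(2) by (simp add: ereal_divide_right_mono)
  show ?thesis
  proof
    assume p: "pruned h m' d' c"
    show False
    proof (cases b)
      case True
      then have "m' / 2 \<le> d' c + ereal (h v)" using p c by simp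
      then have "m / 2 \<le> d c + ereal (h v)" using mono assms(3) by (metis order.trans)
      then have "pruned h m d c" using True c by simp
      then show False using assms(1) by simp
    next
      case False
      then have "m' / 2 \<le> d' c - ereal (h v)" using p c by simp
      then have "m / 2 \<le> d c - ereal (h v)" using mono assms(3) by (metis order.trans)
      then have "pruned h m d c" using False c by simp
      then show False using assms(1) by simp
    qed
  qed
qed

locale trace =
  fixes E :: "('v \<times> 'v) set" and w :: "'v \<Rightarrow> 'v \<Rightarrow> real" and h :: "'v \<Rightarrow> real"
    and s t :: 'v and f :: "nat \<Rightarrow> 'v state" and n :: nat
  assumes f0: "f 0 = init_state s t"
    and stp: "\<And>i. i < n \<Longrightarrow> step E w h (f i) (f (Suc i))"
    and endp: "pend (f n) = {#}" and endf: "fr (f n) = {}"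
    and fin_nb: "\<And>u. finite (nbrs E u)" and st: "s \<noteq> t"
    and finfr: "\<And>i. i \<le> n \<Longrightarrow> finite (fr (f i))"
begin

lemma dl_mono: "i \<le> j \<Longrightarrow> j \<le> n \<Longrightarrow> dl (f j) c \<le> dl (f i) c"
proof (induction j rule: dec_induct)
  case base then show ?case by simp
next
  case (step k)
  have kn: "k < n" using step(4) by simp
  have "dl (f k) c \<le> dl (f i) c" using step(3)[OF less_imp_le[OF kn]] .
  moreover have "dl (f (Suc k)) c \<le> dl (f k) c" using step_dl_mono[OF stp[OF kn]] .
  ultimately show ?case by (rule order.trans[rotated])
qed

lemma mu_mono: "i \<le> j \<Longrightarrow> j \<le> n \<Longrightarrow> mu (f j) \<le> mu (f i)"
proof (induction j rule: dec_induct)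
  case base then show ?case by simp
next
  case (step k)
  have kn: "k < n" using step(4) by simp
  have "mu (f k) \<le> mu (f i)" using step(3)[OF less_imp_le[OF kn]] .
  moreover have "mu (f (Suc k)) \<le> mu (f k)" using step_mu_mono[OF stp[OF kn]] .
  ultimately show ?case by (rule order.trans[rotated])
qed

lemma consume: "X \<in># pend (f i) \<Longrightarrow> i \<le> n \<Longrightarrow>
  \<exists>j. i \<le> j \<and> j < n \<and> X \<in># pend (f j) \<and> X \<notin># pend (f (Suc j))"
  using ex_drop[of "\<lambda>j. X \<in># pend (f j)" i n] endp by auto

lemma leave_fr: "c \<in> fr (f i) \<Longrightarrow> i \<le> n \<Longrightarrow>
  \<exists>j. i \<le> j \<and> j < n \<and> c \<in> fr (f j) \<and> c \<notin> fr (f (Suc j))"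
  using ex_drop[of "\<lambda>j. c \<in> fr (f j)" i n] endf by auto

lemma settle: "\<exists>i \<le> n. (\<forall>j. i \<le> j \<and> j \<le> n \<longrightarrow> dl (f j) c = dl (f n) c) \<and> (i = 0 \<or> Mu c \<in># pend (f i))"
proof (cases "dl (f 0) c = dl (f n) c")
  case True
  have "dl (f j) c = dl (f n) c" if "j \<le> n" for j
    using dl_mono[of 0 j c] dl_mono[of j n c] that True by auto
  then have "\<forall>j. 0 \<le> j \<and> j \<le> n \<longrightarrow> dl (f j) c = dl (f n) c" by blast
  then show ?thesis by blast
next
  case False
  then obtain i where i: "i < n" "dl (f i) c \<noteq> dl (f (Suc i)) c"
    "\<forall>j. Suc i \<le> j \<and> j \<le> n \<longrightarrow> dl (f j) c = dl (f n) c"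
    using last_change[of "\<lambda>j. dl (f j) c" 0 n, OF False le0] by blast
  have "Mu c \<in># pend (f (Suc i))" using step_dl_change[OF stp[OF i(1)]] i(2) by metis
  moreover have "Suc i \<le> n" using i(1) by simp
  ultimately show ?thesis using i(3) by blast
qed

lemma mu_bound: "Mu c \<in># pend (f i) \<Longrightarrow> i \<le> n \<Longrightarrow>
  \<exists>j. i \<le> j \<and> j < n \<and> mu (f n) \<le> dl (f j) (fst c, True) + dl (f j) (fst c, False) \<and> Ins c \<in># pend (f (Suc j))"
proof -
  assume a: "Mu c \<in># pend (f i)" "i \<le> n"
  then obtain j where j: "i \<le> j" "j < n" "Mu c \<in># pend (f j)" "Mu c \<notin># pend (f (Suc j))"
    using consume by blast
  have "mu (f n) \<le> mu (f (Suc j))" using mu_mono j by auto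
  then show ?thesis using step_Mu[OF stp[OF j(2)] j(3,4)] j by (meson order.trans)
qed

lemma avail: "dl (f n) c \<noteq> \<infinity> \<Longrightarrow>
  \<exists>i \<le> n. (\<forall>j. i \<le> j \<and> j \<le> n \<longrightarrow> dl (f j) c = dl (f n) c) \<and> (c \<in> fr (f i) \<or> Ins c \<in># pend (f i))"
proof -
  assume fin: "dl (f n) c \<noteq> \<infinity>"
  obtain i where i: "i \<le> n" "\<forall>j. i \<le> j \<and> j \<le> n \<longrightarrow> dl (f j) c = dl (f n) c" "i = 0 \<or> Mu c \<in># pend (f i)"
    using settle by blast
  show ?thesis
  proof (cases "i = 0")
    case True
    have "dl (f 0) c = dl (f n) c" using i(2) True by blast
    then have "dl (f 0) c \<noteq> \<infinity>" using fin by simp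
    moreover have "dl (f 0) c = ((\<lambda>_. \<infinity>)((s, True) := 0, (t, False) := 0)) c"
      using f0 by (simp add: init_state_def)
    ultimately have "c = (s, True) \<or> c = (t, False)"
      by (cases "c = (s, True)"; cases "c = (t, False)") simp_all
    moreover have "fr (f 0) = {(s, True), (t, False)}" using f0 by (simp add: init_state_def)
    ultimately have "c \<in> fr (f 0)" by auto
    moreover have "\<forall>j. 0 \<le> j \<and> j \<le> n \<longrightarrow> dl (f j) c = dl (f n) c" using i(2) by (simp only: True)
    ultimately show ?thesis by blast
  next
    case False
    then obtain j where j: "i \<le> j" "j < n" "Ins c \<in># pend (f (Suc j))"
      using mu_bound i by blast
    have "\<forall>j'. Suc j \<le> j' \<and> j' \<le> n \<longrightarrow> dl (f j') c = dl (f n) c"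
    proof (intro allI impI)
      fix j' assume "Suc j \<le> j' \<and> j' \<le> n"
      then have "i \<le> j' \<and> j' \<le> n" using j(1) by simp
      then show "dl (f j') c = dl (f n) c" using i(2) by blast
    qed
    moreover have "Suc j \<le> n" using j(2) by simp
    ultimately show ?thesis using j(3) by blast
  qed
qed

lemma propagate:
  assumes fin: "dl (f n) c \<noteq> \<infinity>" and np: "\<not> pruned h (mu (f n)) (dl (f n)) c"
    and v: "v \<in> nbrs E (fst c)"
  shows "dl (f n) (v, snd c) \<le> dl (f n) c + ereal (w (fst c) v)"
proof -
  obtain i where i: "i \<le> n" "\<forall>j. i \<le> j \<and> j \<le> n \<longrightarrow> dl (f j) c = dl (f n) c"
    "c \<in> fr (f i) \<or> Ins c \<in># pend (f i)"
    using avail[OF fin] by blast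
  have npj: "\<not> pruned h (mu (f j)) (dl (f j)) c" if "i \<le> j" "j \<le> n" for j
  proof -
    have "mu (f n) \<le> mu (f j)" using mu_mono[of j n] that by simp
    moreover have "dl (f j) c = dl (f n) c" using i(2) that by blast
    ultimately show ?thesis by (rule notpruned_mono[OF np])
  qed
  obtain i' where i': "i \<le> i'" "i' \<le> n" "c \<in> fr (f i')"
  proof (cases "c \<in> fr (f i)")
    case True then show ?thesis using that i by auto
  next
    case False
    then have "Ins c \<in># pend (f i)" using i by auto
    then obtain j where j: "i \<le> j" "j < n" "Ins c \<in># pend (f j)" "Ins c \<notin># pend (f (Suc j))"
      using consume i by blast
    have "c \<in> fr (f (Suc j))" using step_Ins[OF stp[OF j(2)] j(3,4) npj[of j]] j by auto
    then show ?thesis using j by (intro that[of "Suc j"]) simp_all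
  qed
  obtain j1 where j1: "i' \<le> j1" "j1 < n" "c \<in> fr (f j1)" "c \<notin> fr (f (Suc j1))"
    using leave_fr[OF i'(3,2)] by blast
  have "Check c \<in># pend (f (Suc j1))" using step_fr_remove[OF stp[OF j1(2)] finfr j1(3,4)] j1 by auto
  then obtain j2 where j2: "Suc j1 \<le> j2" "j2 < n" "Check c \<in># pend (f j2)" "Check c \<notin># pend (f (Suc j2))"
    using consume j1 by (meson Suc_leI)
  have "Rd c v \<in># pend (f (Suc j2))"
    using step_Check[OF stp[OF j2(2)] j2(3,4) npj[of j2] fin_nb v] j2 i' j1 by auto
  then obtain j3 where j3: "Suc j2 \<le> j3" "j3 < n" "Rd c v \<in># pend (f j3)" "Rd c v \<notin># pend (f (Suc j3))"
    using consume j2 by (meson Suc_leI)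
  have "Wr (v, snd c) (dl (f j3) c + ereal (w (fst c) v)) \<in># pend (f (Suc j3))"
    using step_Rd[OF stp[OF j3(2)] j3(3,4)] .
  moreover have "dl (f j3) c = dl (f n) c"
  proof -
    have "i \<le> j3 \<and> j3 \<le> n" using i'(1) j1(1) j2(1) j3(1,2) by simp
    then show ?thesis using i(2) by blast
  qed
  ultimately have "Wr (v, snd c) (dl (f n) c + ereal (w (fst c) v)) \<in># pend (f (Suc j3))" by simp
  then obtain j4 where j4: "Suc j3 \<le> j4" "j4 < n" "Wr (v, snd c) (dl (f n) c + ereal (w (fst c) v)) \<in># pend (f j4)"
     "Wr (v, snd c) (dl (f n) c + ereal (w (fst c) v)) \<notin># pend (f (Suc j4))"
    using consume j3 by (meson Suc_leI)
  have "dl (f (Suc j4)) (v, snd c) \<le> dl (f n) c + ereal (w (fst c) v)"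
    using step_Wr[OF stp[OF j4(2)] j4(3,4)] .
  moreover have "dl (f n) (v, snd c) \<le> dl (f (Suc j4)) (v, snd c)" using dl_mono j4 by auto
  ultimately show ?thesis by (meson order.trans)
qed

lemma meet:
  assumes "dl (f n) (v, True) \<noteq> \<infinity>" "dl (f n) (v, False) \<noteq> \<infinity>"
  shows "mu (f n) \<le> dl (f n) (v, True) + dl (f n) (v, False)"
proof -
  obtain i1 where i1: "i1 \<le> n" "\<forall>j. i1 \<le> j \<and> j \<le> n \<longrightarrow> dl (f j) (v, True) = dl (f n) (v, True)"
    "i1 = 0 \<or> Mu (v, True) \<in># pend (f i1)"
    using settle by blast
  obtain i2 where i2: "i2 \<le> n" "\<forall>j. i2 \<le> j \<and> j \<le> n \<longrightarrow> dl (f j) (v, False) = dl (f n) (v, False)"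
    "i2 = 0 \<or> Mu (v, False) \<in># pend (f i2)"
    using settle by blast
  have key: "mu (f n) \<le> dl (f n) (v, True) + dl (f n) (v, False)"
    if H: "Mu c \<in># pend (f i)" "fst c = v" "i \<le> n" "i1 \<le> i" "i2 \<le> i" for c i
  proof -
    obtain j where j: "i \<le> j" "j < n" "mu (f n) \<le> dl (f j) (fst c, True) + dl (f j) (fst c, False)"
      using mu_bound[OF H(1,3)] by blast
    have "i1 \<le> j \<and> j \<le> n" "i2 \<le> j \<and> j \<le> n" using j(1,2) H(4,5) by simp_all
    then have "dl (f j) (v, True) = dl (f n) (v, True)" "dl (f j) (v, False) = dl (f n) (v, False)"
      using i1(2) i2(2) by blast+
    then show ?thesis using j(3) H(2) by simp
  qed
  show ?thesis
  proof (cases "i1 = 0 \<and> i2 = 0")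
    case True
    have "dl (f 0) (v, True) = dl (f n) (v, True)" using i1(2) True by blast
    moreover have "dl (f 0) (v, False) = dl (f n) (v, False)" using i2(2) True by blast
    ultimately have n1: "dl (f 0) (v, True) \<noteq> \<infinity>" and n2: "dl (f 0) (v, False) \<noteq> \<infinity>"
      using assms by simp_all
    have e1: "dl (f 0) (v, True) = (if v = s then 0 else \<infinity>)" using f0 by (simp add: init_state_def)
    have e2: "dl (f 0) (v, False) = (if v = t then 0 else \<infinity>)" using f0 by (simp add: init_state_def)
    have "v = s" using n1 e1 by (cases "v = s") simp_all
    moreover have "v = t" using n2 e2 by (cases "v = t") simp_all
    ultimately have "v = s" "v = t" by simp_all
    then show ?thesis using st by simp
  next
    case False
    show ?thesis
    proof (cases "i2 \<le> i1")
      case True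
      then show ?thesis using key[of "(v, True)" i1] i1(1,3) False by auto
    next
      case F: False
      then show ?thesis using key[of "(v, False)" i2] i2(1,3) False by auto
    qed
  qed
qed

lemma opt:
  assumes sym: "\<And>u v. (u, v) \<in> E \<Longrightarrow> (v, u) \<in> E"
    and wsym: "\<And>u v. (u, v) \<in> E \<Longrightarrow> w u v = w v u"
    and cons: "\<And>u v. (u, v) \<in> E \<Longrightarrow> h u \<le> w u v + h v"
    and xs: "walk E xs" "hd xs = s" "last xs = t"
  shows "mu (f n) \<le> ereal (walk_len w xs)"
proof (rule ccontr)
  define \<mu> where "\<mu> = mu (f n)"
  define L where "L = walk_len w xs"
  assume "\<not> mu (f n) \<le> ereal (walk_len w xs)"
  then have Lmu: "ereal L < \<mu>" unfolding \<mu>_def L_def by simp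
  define m where "m = length xs - 1"
  define x where "x = (\<lambda>i. xs ! i)"
  define p where "p = (\<lambda>i. \<Sum>j<i. w (x j) (x (Suc j)))"
  define q where "q = (\<lambda>i. L - p i)"
  define a where "a = (\<lambda>i. p i + h (x i))"
  define b where "b = (\<lambda>i. q i - h (x i))"
  have ne: "xs \<noteq> []" using xs(1) by (simp add: walk_def)
  have x0: "x 0 = s" using xs ne unfolding x_def by (simp add: hd_conv_nth)
  have xm: "x m = t" using xs ne unfolding x_def m_def by (simp add: last_conv_nth)
  have Lp: "L = p m" unfolding L_def p_def walk_len_def m_def x_def by simp
  have edge: "(x i, x (Suc i)) \<in> E" if "i < m" for i
    using xs(1) that unfolding walk_def x_def m_def by auto
  have pS: "p (Suc i) = p i + w (x i) (x (Suc i))" for i unfolding p_def by simp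
  have aS: "a i \<le> a (Suc i)" if "i < m" for i
    using cons[OF edge[OF that]] unfolding a_def pS by simp
  have amono: "a i \<le> a j" if "i \<le> j" "j \<le> m" for i j
    using that
  proof (induction j rule: dec_induct)
    case base then show ?case by simp
  next
    case (step k) then show ?case using aS[of k] by simp
  qed
  have cover: "ereal (a i) < \<mu> / 2 \<or> ereal (b i) < \<mu> / 2" for i
  proof (rule ccontr)
    assume "\<not> ?thesis"
    then have c1: "\<mu> / 2 \<le> ereal (a i)" "\<mu> / 2 \<le> ereal (b i)" by auto
    have ab: "a i + b i = L" unfolding a_def b_def q_def by simp
    show False
    proof (cases \<mu>)
      case (real r)
      then have "r / 2 \<le> a i" "r / 2 \<le> b i" using c1 by auto
      then show False using Lmu real ab by auto
    next
      case PInf then show False using c1 by auto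
    next
      case MInf then show False using Lmu by auto
    qed
  qed
  have fwd: "i \<le> m \<Longrightarrow> (\<forall>j<i. ereal (a j) < \<mu> / 2) \<longrightarrow> dl (f n) (x i, True) \<le> ereal (p i)" for i
  proof (induction i)
    case 0
    have "dl (f n) (x 0, True) \<le> dl (f 0) (x 0, True)" using dl_mono[of 0 n] by simp
    then show ?case using x0 f0 by (simp add: p_def init_state_def zero_ereal_def)
  next
    case (Suc k)
    have km: "k < m" using Suc.prems by simp
    show ?case
    proof
      assume g: "\<forall>j<Suc k. ereal (a j) < \<mu> / 2"
      then have gk: "\<forall>j<k. ereal (a j) < \<mu> / 2" by simp
      have d: "dl (f n) (x k, True) \<le> ereal (p k)" using Suc.IH[OF less_imp_le[OF km]] gk by blast
      have "dl (f n) (x k, True) + ereal (h (x k)) \<le> ereal (p k) + ereal (h (x k))"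
        by (rule add_right_mono[OF d])
      also have "\<dots> = ereal (a k)" unfolding a_def by simp
      also have "\<dots> < \<mu> / 2" using g by auto
      finally have np: "\<not> pruned h (mu (f n)) (dl (f n)) (x k, True)" unfolding \<mu>_def by auto
      have fin: "dl (f n) (x k, True) \<noteq> \<infinity>" using d by auto
      have "x (Suc k) \<in> nbrs E (fst (x k, True))" using edge[OF km] by (simp add: nbrs_def)
      from propagate[OF fin np this]
      have "dl (f n) (x (Suc k), True) \<le> dl (f n) (x k, True) + ereal (w (x k) (x (Suc k)))" by simp
      also have "\<dots> \<le> ereal (p k) + ereal (w (x k) (x (Suc k)))" by (rule add_right_mono[OF d])
      finally show "dl (f n) (x (Suc k), True) \<le> ereal (p (Suc k))" by (simp add: pS)
    qed
  qed
  have bwd: "(\<forall>j. i < j \<and> j \<le> m \<longrightarrow> ereal (b j) < \<mu> / 2) \<longrightarrow> dl (f n) (x i, False) \<le> ereal (q i)" if "i \<le> m" for i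
    using that
  proof (induction i rule: inc_induct)
    case base
    have "dl (f n) (x m, False) \<le> dl (f 0) (x m, False)" using dl_mono[of 0 n] by simp
    then show ?case using xm f0 by (simp add: q_def Lp init_state_def zero_ereal_def)
  next
    case (step k)
    show ?case
    proof
      assume g: "\<forall>j. k < j \<and> j \<le> m \<longrightarrow> ereal (b j) < \<mu> / 2"
      then have d: "dl (f n) (x (Suc k), False) \<le> ereal (q (Suc k))" using step.IH by auto
      have "dl (f n) (x (Suc k), False) - ereal (h (x (Suc k))) \<le> ereal (q (Suc k)) - ereal (h (x (Suc k)))"
        by (rule ereal_minus_mono[OF d order.refl])
      also have "\<dots> = ereal (b (Suc k))" unfolding b_def by simp
      also have "\<dots> < \<mu> / 2" using g step by auto
      finally have np: "\<not> pruned h (mu (f n)) (dl (f n)) (x (Suc k), False)" unfolding \<mu>_def by auto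
      have fin: "dl (f n) (x (Suc k), False) \<noteq> \<infinity>" using d by auto
      have e: "(x k, x (Suc k)) \<in> E" using edge step by simp
      have "x k \<in> nbrs E (fst (x (Suc k), False))" using sym[OF e] by (simp add: nbrs_def)
      from propagate[OF fin np this]
      have "dl (f n) (x k, False) \<le> dl (f n) (x (Suc k), False) + ereal (w (x (Suc k)) (x k))" by simp
      also have "\<dots> \<le> ereal (q (Suc k)) + ereal (w (x (Suc k)) (x k))" by (rule add_right_mono[OF d])
      also have "\<dots> = ereal (q k)" using wsym[OF e] by (simp add: q_def pS)
      finally show "dl (f n) (x k, False) \<le> ereal (q k)" .
    qed
  qed
  obtain i0 where i0: "i0 \<le> m" "\<forall>j<i0. ereal (a j) < \<mu> / 2" "\<forall>j. i0 < j \<and> j \<le> m \<longrightarrow> ereal (b j) < \<mu> / 2"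
  proof (cases "\<exists>i \<le> m. \<not> ereal (a i) < \<mu> / 2")
    case True
    define i0 where "i0 = (LEAST i. i \<le> m \<and> \<not> ereal (a i) < \<mu> / 2)"
    have P: "i0 \<le> m \<and> \<not> ereal (a i0) < \<mu> / 2" unfolding i0_def using True by (metis (mono_tags, lifting) LeastI)
    have A: "\<forall>j<i0. ereal (a j) < \<mu> / 2"
    proof (intro allI impI)
      fix j assume "j < i0"
      then have "\<not> (j \<le> m \<and> \<not> ereal (a j) < \<mu> / 2)" unfolding i0_def using not_less_Least by blast
      then show "ereal (a j) < \<mu> / 2" using \<open>j < i0\<close> P by auto
    qed
    have B: "\<forall>j. i0 < j \<and> j \<le> m \<longrightarrow> ereal (b j) < \<mu> / 2"
    proof (intro allI impI)
      fix j assume j: "i0 < j \<and> j \<le> m"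
      then have "a i0 \<le> a j" using amono by auto
      then have "ereal (a i0) \<le> ereal (a j)" by simp
      then have "\<not> ereal (a j) < \<mu> / 2" using P by (meson le_less_trans)
      then show "ereal (b j) < \<mu> / 2" using cover[of j] by auto
    qed
    show ?thesis using that P A B by blast
  next
    case False
    then have A: "\<forall>j<m. ereal (a j) < \<mu> / 2" by auto
    have B: "\<forall>j. m < j \<and> j \<le> m \<longrightarrow> ereal (b j) < \<mu> / 2" by auto
    show ?thesis by (rule that[OF order.refl A B])
  qed
  have d1: "dl (f n) (x i0, True) \<le> ereal (p i0)" using fwd[OF i0(1)] i0 by auto
  have d2: "dl (f n) (x i0, False) \<le> ereal (q i0)" using bwd[OF i0(1)] i0 by auto
  have "\<mu> \<le> dl (f n) (x i0, True) + dl (f n) (x i0, False)"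
  proof -
    have "dl (f n) (x i0, True) \<noteq> \<infinity>" using d1 by auto
    moreover have "dl (f n) (x i0, False) \<noteq> \<infinity>" using d2 by auto
    ultimately show ?thesis unfolding \<mu>_def by (rule meet)
  qed
  also have "\<dots> \<le> ereal (p i0) + ereal (q i0)" using add_mono[OF d1 d2] .
  also have "\<dots> = ereal L" by (simp add: q_def)
  finally show False using Lmu by simp
qed

end


theorem theorem3p3:
  fixes V :: "'v set" and E :: "('v \<times> 'v) set" and w :: "'v \<Rightarrow> 'v \<Rightarrow> real"
    and h :: "'v \<Rightarrow> real" and s t :: 'v and \<sigma> :: "'v state"
  assumes "finite V" and "E \<subseteq> V \<times> V"
    and "\<And>u v. (u, v) \<in> E \<Longrightarrow> (v, u) \<in> E"
    and "\<And>u v. (u, v) \<in> E \<Longrightarrow> w u v = w v u"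
    and "\<And>u v. (u, v) \<in> E \<Longrightarrow> w u v > 0"
    and "\<And>u v. (u, v) \<in> E \<Longrightarrow> h u \<le> w u v + h v"
    and "s \<in> V" and "t \<in> V" and "s \<noteq> t"
    and "(step E w h)\<^sup>*\<^sup>* (init_state s t) \<sigma>"
    and "fr \<sigma> = {}" and "pend \<sigma> = {#}"
  shows "mu \<sigma> = dist E w s t"
proof -
  obtain k where "(step E w h ^^ k) (init_state s t) \<sigma>" using rtranclp_power[THEN iffD1, OF assms(10)] by blast
  then obtain g where g: "g 0 = init_state s t \<and> g k = \<sigma> \<and> (\<forall>i<k. step E w h (g i) (g (Suc i)))"
    using relpowp_fun_conv[THEN iffD1] by metis
  have g0: "g 0 = init_state s t" and gk: "g k = \<sigma>" using g by auto
  have gs: "\<And>i. i < k \<Longrightarrow> step E w h (g i) (g (Suc i))" using g by blast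
  have I: "sinv E w s t (g i)" if "i \<le> k" for i
    using that
  proof (induction i)
    case 0 then show ?case using g0 sinv_init by simp
  next
    case (Suc i)
    then have "sinv E w s t (g i)" "i < k" by auto
    then show ?case using sinv_step[OF assms(3,4) gs[of i]] by blast
  qed
  have fnb: "finite (nbrs E u)" for u
  proof -
    have "nbrs E u \<subseteq> V" using assms(2) by (auto simp: nbrs_def)
    then show ?thesis using assms(1) finite_subset by blast
  qed
  interpret tr: trace E w h s t g k
  proof
    show "g 0 = init_state s t" by (rule g0)
    show "\<And>i. i < k \<Longrightarrow> step E w h (g i) (g (Suc i))" by (rule gs)
    show "pend (g k) = {#}" using gk assms(12) by simp
    show "fr (g k) = {}" using gk assms(11) by simp
    show "\<And>u. finite (nbrs E u)" by (rule fnb)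
    show "s \<noteq> t" by (rule assms(9))
    show "\<And>i. i \<le> k \<Longrightarrow> finite (fr (g i))" using I unfolding sinv_def by blast
  qed
  have le: "mu \<sigma> \<le> dist E w s t"
    unfolding dist_def
  proof (rule INF_greatest)
    fix xs assume "xs \<in> {xs. walk E xs \<and> hd xs = s \<and> last xs = t}"
    then show "mu \<sigma> \<le> ereal (walk_len w xs)"
      using tr.opt[OF assms(3,4,6)] gk by auto
  qed
  have "okT E w s t (mu \<sigma>)" using I[of k] gk by (simp add: sinv_def)
  then have ge: "dist E w s t \<le> mu \<sigma>"
    unfolding okT_def
  proof
    assume "mu \<sigma> = \<infinity>" then show ?thesis by simp
  next
    assume "\<exists>xs. walk E xs \<and> hd xs = s \<and> last xs = t \<and> ereal (walk_len w xs) \<le> mu \<sigma>"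
    then obtain xs where xs: "walk E xs" "hd xs = s" "last xs = t" "ereal (walk_len w xs) \<le> mu \<sigma>" by blast
    have "dist E w s t \<le> ereal (walk_len w xs)" unfolding dist_def
      by (rule INF_lower2[of xs]) (use xs in auto)
    then show ?thesis using xs(4) by simp
  qed
  show ?thesis using le ge by simp
qed

end
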